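(* Let $\mathcal U$ be a two-dimensional update family with stable set $\mathcal S$. There exists a finite set $\mathcal Q\subset S^1$ such that for every pair $u,v$ of consecutive elements of $\mathcal S\cup\mathcal Q$ there exists an update rule $X\in\mathcal U$ with $$X\subset\big(\mathbb H_u\cup\ell_u\big)\cap\big(\mathbb H_v\cup\ell_v\big).$$
   Context: An update family is a finite collection $\mathcal U$ of finite subsets of $\mathbb Z^2\setminus\{0\}$ (update rules), acting by $A_{t+1}=A_t\cup\{x:x+X\subset A_t\text{ for some }X\in\mathcal U\}$, closure $[A]=\bigcup_tA_t$. For $u\in S^1$, $\mathbb H_u=\{x\in\mathbb Z^2:\langle x,u\rangle<0\}$ and $\ell_u=\{x\in\mathbb Z^2:\langle x,u\rangle=0\}$; $u$ is stable if $[\mathbb H_u]=\mathbb H_u$. For $\mathcal T\subset S^1$, elements $u,v\in\mathcal T$ are consecutive if $u\ne v$ and $\mathcal T\cap[u,v]=\{u,v\}$, where $[u,v]$ is the closed arc of $S^1$ from $u$ to $v$ (in a fixed orientation). *)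

theory Defs
  imports Complex_Main
begin

text \<open>Lattice points of Z^2 are pairs of integers; directions u in S^1 are complex
numbers of modulus 1 (u = Re u + i Im u).\<close>

type_synonym point = "int \<times> int"

definition padd :: "point \<Rightarrow> point \<Rightarrow> point" where
  "padd x y = (fst x + fst y, snd x + snd y)"

definition update_family :: "point set set \<Rightarrow> bool" where
  "update_family U \<longleftrightarrow> finite U \<and> (\<forall>X\<in>U. finite X \<and> X \<subseteq> UNIV - {(0,0)})"

definition bp_step :: "point set set \<Rightarrow> point set \<Rightarrow> point set" where
  "bp_step U A = A \<union> {x. \<exists>X\<in>U. padd x ` X \<subseteq> A}"

definition bp_closure :: "point set set \<Rightarrow> point set \<Rightarrow> point set" where
  "bp_closure U A = (\<Union>t::nat. (bp_step U ^^ t) A)"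

definition S1 :: "complex set" where
  "S1 = {u. cmod u = 1}"

definition ip :: "point \<Rightarrow> complex \<Rightarrow> real" where
  "ip x u = real_of_int (fst x) * Re u + real_of_int (snd x) * Im u"

definition halfplane :: "complex \<Rightarrow> point set" where
  "halfplane u = {x. ip x u < 0}"

definition line :: "complex \<Rightarrow> point set" where
  "line u = {x. ip x u = 0}"

definition stable :: "point set set \<Rightarrow> complex \<Rightarrow> bool" where
  "stable U u \<longleftrightarrow> bp_closure U (halfplane u) = halfplane u"

definition stable_set :: "point set set \<Rightarrow> complex set" where
  "stable_set U = {u \<in> S1. stable U u}"

definition arc :: "complex \<Rightarrow> complex \<Rightarrow> complex set" where
  "arc u v = {w \<in> S1. \<exists>s t. 0 \<le> s \<and> s \<le> t \<and> t < 2 * pi \<and> w = u * cis s \<and> v = u * cis t}"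

definition consecutive :: "complex set \<Rightarrow> complex \<Rightarrow> complex \<Rightarrow> bool" where
  "consecutive T u v \<longleftrightarrow> u \<in> T \<and> v \<in> T \<and> u \<noteq> v \<and> T \<inter> arc u v = {u, v}"

end

theory Submission imports Defs begin

lemma cos_ne_1: assumes "0 < \<bar>x\<bar>" "\<bar>x\<bar> < 2*pi" shows "cos x \<noteq> 1"
proof
  assume "cos x = 1"
  then obtain n::int where n: "x = n*2*pi" by (auto simp: cos_one_2pi_int)
  have "\<bar>x\<bar> = \<bar>real_of_int n\<bar> * (2*pi)" using n by (simp add: abs_mult)
  with assms have "0 < real_of_int \<bar>n\<bar>" "real_of_int \<bar>n\<bar> < 1" by (auto simp: zero_less_mult_iff)
  then have "0 < \<bar>n\<bar>" "\<bar>n\<bar> < 1" by linarith+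
  then show False by linarith
qed

lemma cis_inj: assumes "u \<noteq> 0" "0 \<le> s" "s < 2*pi" "0 \<le> t" "t < 2*pi" "s \<noteq> t"
  shows "u * cis s \<noteq> u * cis t"
proof
  assume "u * cis s = u * cis t"
  hence "cis s = cis t" using assms by simp
  hence "cis (s - t) = 1" by (simp add: cis_divide[symmetric])
  hence "cos (s - t) = 1" by (metis cis.sel(1) one_complex.sel(1))
  moreover have "0 < \<bar>s - t\<bar>" "\<bar>s - t\<bar> < 2*pi" using assms by auto
  ultimately show False using cos_ne_1 by blast
qed

lemma ip_padd: "ip (padd x y) w = ip x w + ip y w"
  by (simp add: ip_def padd_def algebra_simps)

lemma unstable_rule:
  assumes "\<not> stable U w"
  shows "\<exists>X\<in>U. X \<subseteq> halfplane w"
proof (rule ccontr)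
  assume H: "\<not> ?thesis"
  have step: "bp_step U (halfplane w) = halfplane w"
  proof -
    have "x \<in> halfplane w" if X: "X \<in> U" "padd x ` X \<subseteq> halfplane w" for x X
    proof -
      from H X(1) have "\<not> X \<subseteq> halfplane w" by blast
      then obtain y where y: "y \<in> X" "ip y w \<ge> 0" unfolding halfplane_def by force
      have "ip (padd x y) w < 0" using X(2) y(1) by (auto simp: halfplane_def)
      thus ?thesis using y(2) by (simp add: ip_padd halfplane_def)
    qed
    thus ?thesis unfolding bp_step_def by blast
  qed
  have "(bp_step U ^^ n) (halfplane w) = halfplane w" for n
    by (induction n) (simp_all add: step)
  hence "bp_closure U (halfplane w) = halfplane w" unfolding bp_closure_def by simp
  thus False using assms by (simp add: stable_def)
qed

lemma zeros_finite:
  assumes "y \<noteq> (0,0)"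
  shows "finite {w \<in> S1. ip y w = 0}"
proof -
  obtain a b where ab: "y = (a,b)" by force
  define r where "r = sqrt (real_of_int a ^ 2 + real_of_int b ^ 2)"
  have rpos: "r > 0" using assms ab by (auto simp: r_def add_pos_nonneg add_nonneg_pos)
  have r2: "r^2 = real_of_int a ^ 2 + real_of_int b ^ 2" unfolding r_def by simp
  have "{w \<in> S1. ip y w = 0} \<subseteq> {Complex (- b / r) (a / r), Complex (b / r) (- a / r)}"
  proof
    fix w assume "w \<in> {w \<in> S1. ip y w = 0}"
    then have w1: "Re w ^ 2 + Im w ^ 2 = 1" and w0: "a * Re w + b * Im w = 0"
      by (auto simp: S1_def ip_def ab cmod_def)
    define c where "c = Re w" define d where "d = Im w"
    define e where "e = a * d - b * c"
    have "e^2 = r^2" unfolding e_def r2 using w1 w0 unfolding c_def[symmetric] d_def[symmetric]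
      by algebra
    hence e: "e = r \<or> e = - r" using rpos by (metis power2_eq_iff)
    have w0': "a * c + b * d = 0" using w0 by (simp add: c_def d_def)
    have "c * r^2 - (- b * e) = a * (a * c + b * d)" unfolding e_def r2 by (simp add: algebra_simps power2_eq_square)
    hence c1: "c * r^2 = - b * e" using w0' by simp
    have "d * r^2 - (a * e) = b * (a * c + b * d)" unfolding e_def r2 by (simp add: algebra_simps power2_eq_square)
    hence c2: "d * r^2 = a * e" using w0' by simp
    note cc = c1 c2
    have "w = Complex c d" by (simp add: c_def d_def)
    have cq: "c = - b * e / r^2" using c1 rpos by (simp add: field_simps)
    have dq: "d = a * e / r^2" using c2 rpos by (simp add: field_simps)
    from e show "w \<in> {Complex (- b / r) (a / r), Complex (b / r) (- a / r)}"
    proof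
      assume "e = r" thus ?thesis using cq dq \<open>w = Complex c d\<close> rpos by (simp add: power2_eq_square)
    next
      assume "e = - r" thus ?thesis using cq dq \<open>w = Complex c d\<close> rpos by (simp add: power2_eq_square)
    qed
  qed
  thus ?thesis by (rule finite_subset) simp
qed

lemma cont_ip: "continuous_on A (\<lambda>s. ip y (u * cis s))"
  unfolding ip_def by (intro continuous_intros)

theorem mainTheorem7:
  fixes U :: "point set set"
  assumes "update_family U"
  shows "\<exists>Q. finite Q \<and> Q \<subseteq> S1 \<and>
           (\<forall>u v. consecutive (stable_set U \<union> Q) u v \<longrightarrow>
              (\<exists>X\<in>U. X \<subseteq> (halfplane u \<union> line u) \<inter> (halfplane v \<union> line v)))"
proof -
  define Q where "Q = (\<Union>X\<in>U. \<Union>y\<in>X. {w \<in> S1. ip y w = 0})"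
  have fU: "finite U" "\<And>X. X \<in> U \<Longrightarrow> finite X \<and> X \<subseteq> UNIV - {(0,0)}"
    using assms by (auto simp: update_family_def)
  have "finite Q" unfolding Q_def
  proof (intro finite_UN_I)
    show "finite U" by (rule fU(1))
    fix X assume X: "X \<in> U" thus "finite X" using fU(2) by blast
    fix y assume "y \<in> X" hence "y \<noteq> (0,0)" using fU(2)[OF X] by blast
    thus "finite {w \<in> S1. ip y w = 0}" by (rule zeros_finite)
  qed
  moreover have "Q \<subseteq> S1" unfolding Q_def by blast
  moreover have "\<exists>X\<in>U. X \<subseteq> (halfplane u \<union> line u) \<inter> (halfplane v \<union> line v)"
    if C: "consecutive (stable_set U \<union> Q) u v" for u v
  proof -
    let ?T = "stable_set U \<union> Q"
    have TS: "?T \<subseteq> S1" using \<open>Q \<subseteq> S1\<close> by (auto simp: stable_set_def)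
    have uT: "u \<in> ?T" and vT: "v \<in> ?T" and uv: "u \<noteq> v" and TA: "?T \<inter> arc u v = {u, v}"
      using C by (auto simp: consecutive_def)
    have uS: "u \<in> S1" using uT TS by blast
    hence u0: "u \<noteq> 0" by (auto simp: S1_def)
    have "v \<in> arc u v" using TA by blast
    then obtain s0 t where st: "0 \<le> s0" "s0 \<le> t" "t < 2*pi" "v = u * cis t"
      unfolding arc_def by blast
    have "t \<noteq> 0" using uv st by auto
    hence t0: "0 < t" using st by linarith
    have A: "u * cis s \<notin> ?T" if s: "0 < s" "s < t" for s
    proof
      assume H: "u * cis s \<in> ?T"
      have "u * cis s \<in> S1" using uS by (simp add: S1_def norm_mult)
      hence "u * cis s \<in> arc u v" unfolding arc_def using s st
        by (intro CollectI conjI exI[of _ s] exI[of _ t]) auto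
      with H TA have "u * cis s = u \<or> u * cis s = v" by blast
      moreover have "u * cis s \<noteq> u * cis 0" by (rule cis_inj) (use u0 s st in auto)
      moreover have "u * cis s \<noteq> u * cis t" by (rule cis_inj) (use u0 s st in auto)
      ultimately show False using st by simp
    qed
    define m where "m = u * cis (t/2)"
    have "m \<notin> stable_set U" using A[of "t/2"] t0 unfolding m_def by auto
    moreover have mS: "m \<in> S1" using uS by (simp add: S1_def norm_mult m_def)
    ultimately have "\<not> stable U m" by (simp add: stable_set_def)
    then obtain X where X: "X \<in> U" "X \<subseteq> halfplane m" using unstable_rule by blast
    have "X \<subseteq> (halfplane u \<union> line u) \<inter> (halfplane v \<union> line v)"
    proof
      fix y assume y: "y \<in> X"
      have ym: "ip y (u * cis (t/2)) < 0" using X(2) y by (auto simp: halfplane_def m_def)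
      have zero: False if s: "0 < s" "s < t" "ip y (u * cis s) = 0" for s
      proof -
        have "u * cis s \<in> S1" using uS by (simp add: S1_def norm_mult)
        hence "u * cis s \<in> Q" unfolding Q_def using X(1) y s by blast
        thus False using A[OF s(1,2)] by blast
      qed
      have "ip y u \<le> 0"
      proof (rule ccontr)
        assume "\<not> ?thesis"
        hence pos: "ip y (u * cis 0) > 0" by simp
        obtain s where s: "0 \<le> s" "s \<le> t/2" "ip y (u * cis s) = 0"
          using IVT2'[of "\<lambda>s. ip y (u * cis s)" "t/2" 0 0, OF _ _ _ cont_ip] pos ym t0 by auto
        have "s \<noteq> 0" using s pos by auto
        thus False using zero[of s] s t0 by auto
      qed
      moreover have "ip y v \<le> 0"
      proof (rule ccontr)
        assume "\<not> ?thesis"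
        hence pos: "ip y (u * cis t) > 0" using st by simp
        obtain s where s: "t/2 \<le> s" "s \<le> t" "ip y (u * cis s) = 0"
          using IVT'[of "\<lambda>s. ip y (u * cis s)" "t/2" 0 t, OF _ _ _ cont_ip] pos ym t0 by auto
        have "s \<noteq> t" using s pos by auto
        thus False using zero[of s] s t0 by auto
      qed
      ultimately show "y \<in> (halfplane u \<union> line u) \<inter> (halfplane v \<union> line v)"
        by (auto simp: halfplane_def line_def)
    qed
    thus ?thesis using X(1) by blast
  qed
  ultimately show ?thesis by blast
qed

end
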